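(* Let $k\in\mathbb{Z}$ with $k<-2$, $j\in\{-\tfrac12,-1,\dots\}$, $s\in\mathbb{Z}$, and let $V$ be any of the modules $D^{k,s}_0$, $D^{+,k,s}_j$, $D^{-,k,s}_j$, with its $\mathbb{Z}\times\mathbb{Z}$ grading $V=\bigoplus_{m,n\in\mathbb{Z}}V_{m,n}$. Then (i) $\dim_\mathbb{C}V_{m,n}<\infty$ for all $m,n\in\mathbb{Z}$; (ii) for every $n\in\mathbb{Z}$ there is $N_n\in\mathbb{Z}$ such that $V_{m,n}=\{0\}$ for all $m\le N_n$.
   Context: $\mathfrak{sl}_2$ has basis $J^+,J^-,J^0$ with $[J^+,J^-]=J^0$, $[J^0,J^\pm]=\pm2J^\pm$. For $j\in-\tfrac12\mathbb{N}$, $D^+_j$ is the $\mathfrak{sl}_2$-module with basis $\{|j,m\rangle_+\}_{m\ge0}$, $J^0|j,m\rangle_+=2(m-j)|j,m\rangle_+$, $J^+|j,m\rangle_+=\sqrt{(m+1)(m-2j)}|j,m+1\rangle_+$, $J^-|j,m\rangle_+=-\sqrt{m(m-1-2j)}|j,m-1\rangle_+$; $D^-_j$ has basis $\{|j,m\rangle_-\}_{m\ge0}$, $J^0|j,m\rangle_-=2(j-m)|j,m\rangle_-$, $J^+|j,m\rangle_-=-\sqrt{m(m-1-2j)}|j,m-1\rangle_-$, $J^-|j,m\rangle_-=\sqrt{(m+1)(m-2j)}|j,m+1\rangle_-$; $D_0=\mathbb{C}$ is the trivial module. $\widehat{\mathfrak{sl}}_2$ has generators $J^a_n$ ($a\in\{+,-,0\}$,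 $n\in\mathbb{Z}$), $K$, $d$ with $[J^+_m,J^-_n]=J^0_{m+n}+Km\delta_{m+n,0}$, $[J^0_m,J^\pm_n]=\pm2J^\pm_{m+n}$, $[J^0_m,J^0_n]=2Km\delta_{m+n,0}$, $[J^\pm_m,J^\pm_n]=0$, $[d,J^a_n]=nJ^a_n$, $K$ central; $J^a_0$ is identified with $J^a$. With $\mathfrak{r}_+=\mathrm{span}\{J^a_n:n\ge1\}$, $\mathfrak{k}=\mathrm{span}\{J^a_0,K,d\}$, the prolongation of $V\in\{D^\pm_j,D_0\}$ at level $k$ is $V^k=\mathcal{U}(\widehat{\mathfrak{sl}}_2)\otimes_{\mathcal{U}(\mathfrak{k}\oplus\mathfrak{r}_+)}V^{(k)}$, where on $V^{(k)}=V$ the element $K$ acts as $k$, $\mathfrak{r}_+$ as $0$, and $d$ by the scalar $-\frac{j(j+1)}{k+2}$ (for $D^\pm_j$) resp. $0$ (for $D_0$). The spectral flow automorphism $\vartheta_s$ is $J^\pm_n\mapsto J^\pm_{n\mp s}$, $J^0_n\mapsto J^0_n-sK\delta_{n,0}$, $K\mapsto K$, $d\mapsto d+\frac s2J^0_0-\frac{s^2}4K$, and for a module $(W,\rho)$, $W^s=(W,\rho\circ\vartheta_s)$. Set $D^{\pm,k,s}_j=((D^\pm_j)^k)^s$, $D^{k,s}_0=((D_0)^k)^s$. The distinguished cyclic vector of such a module is $v_0=1\otimes|j,0\rangle_\pm$ resp. $1\otimes1$; it is a simultaneous eigenvector of $d$ and $J^0_0$ (for the flowed action) with eigenvalues $\delta_0,q_0$.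 The $\mathbb{Z}\times\mathbb{Z}$ grading is $V_{m,n}=\{v\in V: dv=(\delta_0-m)v,\ J^0_0v=(q_0+2n)v\}$ (so $-d$, which acts as the Sugawara $L_0$, has eigenvalue $-\delta_0+m$ on $V_{m,n}$), and $V=\bigoplus_{m,n}V_{m,n}$. *)

theory Defs
  imports Complex_Main
begin

text \<open>Basis of the affine Lie algebra: J^+_n, J^-_n, J^0_n, K, d.\<close>
datatype gen = Jp int | Jm int | J0 int | Kc | Dd

type_synonym lc = "(complex \<times> gen) list"

fun br :: "gen \<Rightarrow> gen \<Rightarrow> lc" where
  "br (Jp m) (Jm n) = [(1, J0 (m + n))] @ (if m + n = 0 then [(of_int m, Kc)] else [])"
| "br (Jm n) (Jp m) = [(-1, J0 (m + n))] @ (if m + n = 0 then [(- of_int m, Kc)] else [])"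
| "br (J0 m) (Jp n) = [(2, Jp (m + n))]"
| "br (Jp n) (J0 m) = [(-2, Jp (m + n))]"
| "br (J0 m) (Jm n) = [(-2, Jm (m + n))]"
| "br (Jm n) (J0 m) = [(2, Jm (m + n))]"
| "br (J0 m) (J0 n) = (if m + n = 0 then [(2 * of_int m, Kc)] else [])"
| "br Dd (Jp n) = [(of_int n, Jp n)]"
| "br Dd (Jm n) = [(of_int n, Jm n)]"
| "br Dd (J0 n) = [(of_int n, J0 n)]"
| "br (Jp n) Dd = [(- of_int n, Jp n)]"
| "br (Jm n) Dd = [(- of_int n, Jm n)]"
| "br (J0 n) Dd = [(- of_int n, J0 n)]"
| "br _ _ = []"

text \<open>Spectral flow automorphism theta_s on basis elements.\<close>
fun flow :: "int \<Rightarrow> gen \<Rightarrow> lc" where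
  "flow s (Jp n) = [(1, Jp (n - s))]"
| "flow s (Jm n) = [(1, Jm (n + s))]"
| "flow s (J0 n) = [(1, J0 n)] @ (if n = 0 then [(- of_int s, Kc)] else [])"
| "flow s Kc = [(1, Kc)]"
| "flow s Dd = [(1, Dd), (of_int s / 2, J0 0), (- ((of_int s) ^ 2) / 4, Kc)]"

text \<open>The parabolic subalgebra k + r_+ : J^a_n (n \<ge> 0), K, d.\<close>
fun in_p :: "gen \<Rightarrow> bool" where
  "in_p (Jp n) = (n \<ge> 0)"
| "in_p (Jm n) = (n \<ge> 0)"
| "in_p (J0 n) = (n \<ge> 0)"
| "in_p Kc = True"
| "in_p Dd = True"

text \<open>Actions of k + r_+ on V^(k) (only used on generators satisfying in_p).
  Basis vectors of V are indexed by 'b; the action of a generator on a basis vector is a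
  finite formal linear combination of basis vectors.\<close>

fun pact_triv :: "int \<Rightarrow> gen \<Rightarrow> unit \<Rightarrow> (complex \<times> unit) list" where
  "pact_triv k Kc u = [(of_int k, u)]"
| "pact_triv k _ u = []"

definition delta_j :: "int \<Rightarrow> real \<Rightarrow> real" where
  "delta_j k j = - (j * (j + 1)) / (real_of_int k + 2)"

fun pact_plus :: "int \<Rightarrow> real \<Rightarrow> gen \<Rightarrow> nat \<Rightarrow> (complex \<times> nat) list" where
  "pact_plus k j (J0 n) m = (if n = 0 then [(of_real (2 * (real m - j)), m)] else [])"
| "pact_plus k j (Jp n) m =
     (if n = 0 then [(of_real (sqrt ((real m + 1) * (real m - 2 * j))), m + 1)] else [])"
| "pact_plus k j (Jm n) m =
     (if n = 0 \<and> m > 0 then [(of_real (- sqrt (real m * (real m - 1 - 2 * j))), m - 1)] else [])"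
| "pact_plus k j Kc m = [(of_int k, m)]"
| "pact_plus k j Dd m = [(of_real (delta_j k j), m)]"

fun pact_minus :: "int \<Rightarrow> real \<Rightarrow> gen \<Rightarrow> nat \<Rightarrow> (complex \<times> nat) list" where
  "pact_minus k j (J0 n) m = (if n = 0 then [(of_real (2 * (j - real m)), m)] else [])"
| "pact_minus k j (Jp n) m =
     (if n = 0 \<and> m > 0 then [(of_real (- sqrt (real m * (real m - 1 - 2 * j))), m - 1)] else [])"
| "pact_minus k j (Jm n) m =
     (if n = 0 then [(of_real (sqrt ((real m + 1) * (real m - 2 * j))), m + 1)] else [])"
| "pact_minus k j Kc m = [(of_int k, m)]"
| "pact_minus k j Dd m = [(of_real (delta_j k j), m)]"

text \<open>The free space: finitely supported complex functions on (word in generators) x (basis of V).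
  The word g1 ... gr paired with b stands for g1 \<cdots> gr \<otimes> b.\<close>

definition fin_supp :: "(gen list \<times> 'b \<Rightarrow> complex) \<Rightarrow> bool" where
  "fin_supp f \<longleftrightarrow> finite {z. f z \<noteq> 0}"

definition word_elem :: "gen list \<Rightarrow> 'b \<Rightarrow> (gen list \<times> 'b \<Rightarrow> complex)" where
  "word_elem w b = (\<lambda>z. if z = (w, b) then 1 else 0)"

text \<open>Relations of U(g): w x y w' - w y x w' - w [x,y] w'.\<close>
definition comm_gen :: "gen list \<Rightarrow> gen \<Rightarrow> gen \<Rightarrow> gen list \<Rightarrow> 'b \<Rightarrow> (gen list \<times> 'b \<Rightarrow> complex)" where
  "comm_gen w x y w' b = (\<lambda>z. word_elem (w @ [x, y] @ w') b z - word_elem (w @ [y, x] @ w') b z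
      - (\<Sum>(c, h)\<leftarrow>br x y. c * word_elem (w @ [h] @ w') b z))"

text \<open>Relations of the tensor product over U(k + r_+): w x \<otimes> b - w \<otimes> (x . b).\<close>
definition ind_gen :: "(gen \<Rightarrow> 'b \<Rightarrow> (complex \<times> 'b) list) \<Rightarrow> gen list \<Rightarrow> gen \<Rightarrow> 'b
    \<Rightarrow> (gen list \<times> 'b \<Rightarrow> complex)" where
  "ind_gen pact w x b = (\<lambda>z. word_elem (w @ [x]) b z - (\<Sum>(c, b')\<leftarrow>pact x b. c * word_elem w b' z))"

text \<open>The subspace spanned by all relations; the induced module is the quotient by it.\<close>
inductive_set rel :: "(gen \<Rightarrow> 'b \<Rightarrow> (complex \<times> 'b) list) \<Rightarrow> (gen list \<times> 'b \<Rightarrow> complex) set"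
  for pact :: "gen \<Rightarrow> 'b \<Rightarrow> (complex \<times> 'b) list" where
  rel_zero: "(\<lambda>_. 0) \<in> rel pact"
| rel_comm: "f \<in> rel pact \<Longrightarrow> (\<lambda>z. c * comm_gen w x y w' b z + f z) \<in> rel pact"
| rel_ind: "in_p x \<Longrightarrow> f \<in> rel pact \<Longrightarrow> (\<lambda>z. c * ind_gen pact w x b z + f z) \<in> rel pact"

definition qeq :: "(gen \<Rightarrow> 'b \<Rightarrow> (complex \<times> 'b) list) \<Rightarrow> (gen list \<times> 'b \<Rightarrow> complex)
    \<Rightarrow> (gen list \<times> 'b \<Rightarrow> complex) \<Rightarrow> bool" where
  "qeq pact f g \<longleftrightarrow> (\<lambda>z. f z - g z) \<in> rel pact"

definition lmul :: "gen \<Rightarrow> (gen list \<times> 'b \<Rightarrow> complex) \<Rightarrow> (gen list \<times> 'b \<Rightarrow> complex)" where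
  "lmul g f = (\<lambda>(w, b). case w of [] \<Rightarrow> 0 | h # w' \<Rightarrow> if h = g then f (w', b) else 0)"

definition act_lc :: "lc \<Rightarrow> (gen list \<times> 'b \<Rightarrow> complex) \<Rightarrow> (gen list \<times> 'b \<Rightarrow> complex)" where
  "act_lc L f = (\<lambda>z. \<Sum>(c, g)\<leftarrow>L. c * lmul g f z)"

text \<open>Action of a generator in the spectrally flowed module W^s = (W, rho o theta_s).\<close>
definition flow_act :: "int \<Rightarrow> gen \<Rightarrow> (gen list \<times> 'b \<Rightarrow> complex) \<Rightarrow> (gen list \<times> 'b \<Rightarrow> complex)" where
  "flow_act s g f = act_lc (flow s g) f"

text \<open>Representatives of V_{m,n} (given the eigenvalues delta0, q0 of the cyclic vector).\<close>
definition Vmn :: "(gen \<Rightarrow> 'b \<Rightarrow> (complex \<times> 'b) list) \<Rightarrow> int \<Rightarrow> complex \<Rightarrow> complex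
    \<Rightarrow> int \<Rightarrow> int \<Rightarrow> (gen list \<times> 'b \<Rightarrow> complex) set" where
  "Vmn pact s delta0 q0 m n = {f. fin_supp f
     \<and> qeq pact (flow_act s Dd f) (\<lambda>z. (delta0 - of_int m) * f z)
     \<and> qeq pact (flow_act s (J0 0) f) (\<lambda>z. (q0 + 2 * of_int n) * f z)}"

definition cspan :: "(gen list \<times> 'b \<Rightarrow> complex) set \<Rightarrow> (gen list \<times> 'b \<Rightarrow> complex) set" where
  "cspan B = {g. \<exists>c. g = (\<lambda>z. \<Sum>v\<in>B. c v * v z)}"

text \<open>The two claims (i) and (ii) for the module induced from pact, flowed by s, with cyclic
  vector 1 \<otimes> b0, whose d- and J^0_0-eigenvalues are delta0 and q0.\<close>
definition grading_props :: "(gen \<Rightarrow> 'b \<Rightarrow> (complex \<times> 'b) list) \<Rightarrow> 'b \<Rightarrow> int \<Rightarrow> bool" where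
  "grading_props pact b0 s \<longleftrightarrow>
     (\<forall>delta0 q0.
        qeq pact (flow_act s Dd (word_elem [] b0)) (\<lambda>z. delta0 * word_elem [] b0 z)
      \<and> qeq pact (flow_act s (J0 0) (word_elem [] b0)) (\<lambda>z. q0 * word_elem [] b0 z)
      \<longrightarrow> (\<forall>m n. \<exists>B. finite B \<and> (\<forall>f \<in> Vmn pact s delta0 q0 m n. \<exists>g \<in> cspan B. qeq pact f g))
        \<and> (\<forall>n. \<exists>N. \<forall>m \<le> N. \<forall>f \<in> Vmn pact s delta0 q0 m n. f \<in> rel pact))"

end

theory Submission imports Defs begin

lemma rel_add:
  assumes "f \<in> rel pact" "g \<in> rel pact" shows "(\<lambda>z. f z + g z) \<in> rel pact"
  using assms(1)
proof induct
  case rel_zero then show ?case using assms(2) by simp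
next
  case (rel_comm f c w x y w' b)
  from rel.rel_comm[OF rel_comm(2), of c w x y w' b] show ?case by (simp add: add.assoc)
next
  case (rel_ind x f c w b)
  from rel.rel_ind[OF rel_ind(1) rel_ind(3), of c w b] show ?case by (simp add: add.assoc)
qed

lemma rel_scale:
  assumes "f \<in> rel pact" shows "(\<lambda>z. a * f z) \<in> rel pact"
  using assms
proof induct
  case rel_zero then show ?case using rel.rel_zero by simp
next
  case (rel_comm f c w x y w' b)
  from rel.rel_comm[OF rel_comm(2), of "a*c" w x y w' b] show ?case by (simp add: algebra_simps)
next
  case (rel_ind x f c w b)
  from rel.rel_ind[OF rel_ind(1) rel_ind(3), of "a*c" w b] show ?case by (simp add: algebra_simps)
qed

lemma sl_case0[simp]: "(\<Sum>(c, h)\<leftarrow>L. (0::complex)) = 0"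
  by (induct L) auto

lemma lmul_app:
  "lmul g f ([], b) = 0" "lmul g f (h # w, b) = (if h = g then f (w, b) else 0)"
  by (simp_all add: lmul_def)

lemma lmul_comm_gen: "lmul g (comm_gen w x y w' b) = comm_gen (g # w) x y w' b"
proof (rule ext)
  fix z :: "gen list \<times> 'a" obtain u b' where z: "z = (u, b')" by (cases z)
  show "lmul g (comm_gen w x y w' b) z = comm_gen (g # w) x y w' b z"
    unfolding z by (cases u) (auto simp: lmul_app comm_gen_def word_elem_def)
qed

lemma lmul_ind_gen: "lmul g (ind_gen pact w x b) = ind_gen pact (g # w) x b"
proof (rule ext)
  fix z :: "gen list \<times> 'a" obtain u b' where z: "z = (u, b')" by (cases z)
  show "lmul g (ind_gen pact w x b) z = ind_gen pact (g # w) x b z"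
    unfolding z by (cases u) (auto simp: lmul_app ind_gen_def word_elem_def)
qed

lemma lmul_lin: "lmul g (\<lambda>z. a * f z + h z) = (\<lambda>z. a * lmul g f z + lmul g h z)"
  by (auto simp: lmul_def fun_eq_iff split: list.split)

lemma lmul_zero: "lmul g (\<lambda>z. 0) = (\<lambda>z. 0)"
  by (auto simp: lmul_def fun_eq_iff split: list.split)

lemma rel_lmul: assumes "f \<in> rel pact" shows "lmul g f \<in> rel pact"
  using assms
proof induct
  case rel_zero then show ?case using rel.rel_zero by (simp add: lmul_zero)
next
  case (rel_comm f c w x y w' b)
  from rel.rel_comm[OF rel_comm(2), of c "g#w" x y w' b] show ?case
    by (simp add: lmul_lin lmul_comm_gen)
next
  case (rel_ind x f c w b)
  from rel.rel_ind[OF rel_ind(1) rel_ind(3), of c "g#w" b] show ?case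
    by (simp add: lmul_lin lmul_ind_gen)
qed


lemma qeq_refl: "qeq pact f f"
  unfolding qeq_def using rel.rel_zero by simp

lemma qeq_ext: "f = g \<Longrightarrow> qeq pact f g"
  using qeq_refl by simp

lemma qeq_scale: "qeq pact f g \<Longrightarrow> qeq pact (\<lambda>z. a * f z) (\<lambda>z. a * g z)"
  unfolding qeq_def using rel_scale[of "\<lambda>z. f z - g z" pact a] by (simp add: algebra_simps)

lemma qeq_sym: "qeq pact f g \<Longrightarrow> qeq pact g f"
  unfolding qeq_def using rel_scale[of "\<lambda>z. f z - g z" pact "-1"] by (simp add: algebra_simps)

lemma qeq_trans: "qeq pact f g \<Longrightarrow> qeq pact g h \<Longrightarrow> qeq pact f h"
  unfolding qeq_def using rel_add[of "\<lambda>z. f z - g z" pact "\<lambda>z. g z - h z"] by (simp add: algebra_simps)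

lemma qeq_add: "qeq pact f g \<Longrightarrow> qeq pact f' g' \<Longrightarrow> qeq pact (\<lambda>z. f z + f' z) (\<lambda>z. g z + g' z)"
  unfolding qeq_def using rel_add[of "\<lambda>z. f z - g z" pact "\<lambda>z. f' z - g' z"] by (simp add: algebra_simps)

lemma qeq_diff: "qeq pact f g \<Longrightarrow> qeq pact f' g' \<Longrightarrow> qeq pact (\<lambda>z. f z - f' z) (\<lambda>z. g z - g' z)"
  using qeq_add[of pact f g "\<lambda>z. - f' z" "\<lambda>z. - g' z"] qeq_scale[of pact f' g' "-1"] by simp

lemma lmul_diff: "lmul g (\<lambda>z. f z - h z) = (\<lambda>z. lmul g f z - lmul g h z)"
  by (auto simp: lmul_def fun_eq_iff split: list.split)

lemma lmul_scale: "lmul g (\<lambda>z. a * f z) = (\<lambda>z. a * lmul g f z)"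
  by (auto simp: lmul_def fun_eq_iff split: list.split)

lemma qeq_lmul: "qeq pact f g \<Longrightarrow> qeq pact (lmul h f) (lmul h g)"
  unfolding qeq_def using rel_lmul[of "\<lambda>z. f z - g z" pact h] by (simp add: lmul_diff)

lemma act_lc_Nil[simp]: "act_lc [] f = (\<lambda>z. 0)"
  by (simp add: act_lc_def)

lemma act_lc_Cons[simp]: "act_lc ((c, g) # L) f = (\<lambda>z. c * lmul g f z + act_lc L f z)"
  by (simp add: act_lc_def)

lemma act_lc_append[simp]: "act_lc (L1 @ L2) f = (\<lambda>z. act_lc L1 f z + act_lc L2 f z)"
  by (simp add: act_lc_def)

lemma qeq_act: "qeq pact f g \<Longrightarrow> qeq pact (act_lc L f) (act_lc L g)"
proof (induct L)
  case Nil then show ?case by (simp add: qeq_refl)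
next
  case (Cons a L)
  obtain c h where a: "a = (c, h)" by (cases a)
  show ?case unfolding a act_lc_Cons
    by (rule qeq_add[OF qeq_scale[OF qeq_lmul[OF Cons(2)]] Cons(1)[OF Cons(2)]])
qed

lemma act_lin: "act_lc L (\<lambda>z. a * f z + h z) = (\<lambda>z. a * act_lc L f z + act_lc L h z)"
proof (induct L)
  case Nil then show ?case by simp
next
  case (Cons x L)
  obtain c g where x: "x = (c, g)" by (cases x)
  show ?case unfolding x act_lc_Cons Cons lmul_lin by (simp add: fun_eq_iff algebra_simps)
qed

lemma act_diff: "act_lc L (\<lambda>z. f z - h z) = (\<lambda>z. act_lc L f z - act_lc L h z)"
  using act_lin[of L "-1" h f] by (simp add: algebra_simps)

lemma act_zero: "act_lc L (\<lambda>z. 0) = (\<lambda>z. 0)"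
  by (induct L) (auto simp: lmul_zero)

lemma act_scale: "act_lc L (\<lambda>z. a * f z) = (\<lambda>z. a * act_lc L f z)"
  using act_lin[of L a f "\<lambda>z. 0"] by (simp add: act_zero)


definition pm :: "gen list \<times> 'b \<Rightarrow> gen list \<times> 'b \<Rightarrow> complex" where
  "pm v = (\<lambda>z. if z = v then 1 else 0)"

definition supp :: "(gen list \<times> 'b \<Rightarrow> complex) \<Rightarrow> (gen list \<times> 'b) set" where
  "supp f = {z. f z \<noteq> 0}"

lemma word_pm: "word_elem w b = pm (w, b)"
  by (auto simp: word_elem_def pm_def fun_eq_iff)

lemma fin_supp_iff: "fin_supp f \<longleftrightarrow> finite (supp f)"
  by (simp add: fin_supp_def supp_def)

lemma expand: "finite S \<Longrightarrow> supp g \<subseteq> S \<Longrightarrow> (\<lambda>z. \<Sum>v\<in>S. g v * pm v z) = g"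
  by (auto simp: pm_def fun_eq_iff supp_def if_distrib sum.delta' cong: if_cong)

lemma qeq_sum: "finite S \<Longrightarrow> (\<And>v. v \<in> S \<Longrightarrow> qeq pact (F v) (G v))
   \<Longrightarrow> qeq pact (\<lambda>z. \<Sum>v\<in>S. F v z) (\<lambda>z. \<Sum>v\<in>S. G v z)"
proof (induct S rule: finite_induct)
  case empty then show ?case by (simp add: qeq_refl)
next
  case (insert x T)
  then show ?case using qeq_add[of pact "F x" "G x"] by simp
qed

lemma act_sum: "finite S \<Longrightarrow> act_lc L (\<lambda>z. \<Sum>v\<in>S. F v z) = (\<lambda>z. \<Sum>v\<in>S. act_lc L (F v) z)"
proof (induct S rule: finite_induct)
  case empty then show ?case by (simp add: act_zero)
next
  case (insert x T)
  then show ?case using act_lin[of L 1 "F x"] by simp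
qed

lemma act_eig_comb:
  assumes eig: "\<And>v. qeq pact (act_lc L (pm v)) (\<lambda>z. e v * pm v z)"
    and fs: "fin_supp g"
  shows "qeq pact (act_lc L g) (\<lambda>v. e v * g v)"
proof -
  have fin: "finite (supp g)" using fs by (simp add: fin_supp_iff)
  have g: "g = (\<lambda>z. \<Sum>v\<in>supp g. g v * pm v z)" using expand[OF fin] by simp
  have "act_lc L g = (\<lambda>z. \<Sum>v\<in>supp g. g v * act_lc L (pm v) z)"
    by (subst g, simp add: act_sum[OF fin] act_scale)
  moreover have "qeq pact (\<lambda>z. \<Sum>v\<in>supp g. g v * act_lc L (pm v) z)
      (\<lambda>z. \<Sum>v\<in>supp g. g v * (e v * pm v z))"
    by (rule qeq_sum[OF fin], rule qeq_scale, rule eig)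
  moreover have "(\<lambda>z. \<Sum>v\<in>supp g. g v * (e v * pm v z)) = (\<lambda>v. e v * g v)"
  proof -
    have "supp (\<lambda>v. e v * g v) \<subseteq> supp g" by (auto simp: supp_def)
    from expand[OF fin this] show ?thesis by (simp add: algebra_simps)
  qed
  ultimately show ?thesis by simp
qed

lemma sep_aux:
  assumes eig: "\<And>v. qeq pact (act_lc L (pm v)) (\<lambda>z. e v * pm v z)"
  shows "\<forall>f g. card (e ` supp g - {lam}) = n \<longrightarrow> fin_supp g \<longrightarrow> qeq pact f g
     \<longrightarrow> qeq pact (act_lc L f) (\<lambda>z. lam * f z)
     \<longrightarrow> qeq pact f (\<lambda>v. if e v = lam then g v else 0)"
proof (induct n rule: less_induct)
  case (less n)
  show ?case
  proof (intro allI impI)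
    fix f g
    assume cn: "card (e ` supp g - {lam}) = n" and fs: "fin_supp g" and fg: "qeq pact f g"
      and ef: "qeq pact (act_lc L f) (\<lambda>z. lam * f z)"
    have fin: "finite (supp g)" using fs by (simp add: fin_supp_iff)
    show "qeq pact f (\<lambda>v. if e v = lam then g v else 0)"
    proof (cases "e ` supp g - {lam} = {}")
      case True
      then have "(\<lambda>v. if e v = lam then g v else 0) = g" by (auto simp: fun_eq_iff supp_def)
      thus ?thesis using fg by simp
    next
      case False then obtain a where a: "a \<in> e ` supp g" "a \<noteq> lam" by auto
      define f' where "f' = (\<lambda>z. act_lc L f z - a * f z)"
      define g' where "g' = (\<lambda>v. (e v - a) * g v)"
      have sub: "supp g' \<subseteq> supp g" by (auto simp: supp_def g'_def)
      have fs': "fin_supp g'" using finite_subset[OF sub fin] by (simp add: fin_supp_iff)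
      have "qeq pact (act_lc L f) (\<lambda>v. e v * g v)"
        using qeq_trans[OF qeq_act[OF fg] act_eig_comb[OF eig fs]] .
      from qeq_diff[OF this qeq_scale[OF fg, of a]]
      have fg': "qeq pact f' g'" by (simp add: f'_def g'_def algebra_simps)
      have "act_lc L f' = (\<lambda>z. act_lc L (act_lc L f) z - a * act_lc L f z)"
        by (simp add: f'_def act_diff act_scale)
      moreover have "qeq pact (\<lambda>z. act_lc L (act_lc L f) z - a * act_lc L f z)
                             (\<lambda>z. lam * act_lc L f z - a * (lam * f z))"
        using qeq_diff[OF qeq_act[OF ef, of L] qeq_scale[OF ef, of a]] by (simp add: act_scale)
      moreover have "(\<lambda>z. lam * act_lc L f z - a * (lam * f z)) = (\<lambda>z. lam * f' z)"
        by (simp add: f'_def algebra_simps)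
      ultimately have ef': "qeq pact (act_lc L f') (\<lambda>z. lam * f' z)" by simp
      have "e ` supp g' - {lam} \<subseteq> (e ` supp g - {lam}) - {a}"
        by (auto simp: supp_def g'_def)
      moreover have "finite (e ` supp g - {lam})" using fin by simp
      ultimately have "card (e ` supp g' - {lam}) \<le> card ((e ` supp g - {lam}) - {a})"
        by (meson card_mono finite_Diff)
      also have "\<dots> < card (e ` supp g - {lam})"
        using a \<open>finite (e ` supp g - {lam})\<close> by (intro card_Diff1_less) auto
      finally have lt: "card (e ` supp g' - {lam}) < n" using cn by simp
      from less[OF lt] fs' fg' ef'
      have h1: "qeq pact f' (\<lambda>v. if e v = lam then g' v else 0)" by blast
      have h2: "(\<lambda>v. if e v = lam then g' v else 0) = (\<lambda>z. (lam - a) * (if e z = lam then g z else 0))"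
        by (auto simp: g'_def fun_eq_iff)
      have "qeq pact f' (\<lambda>z. lam * f z - a * f z)"
        unfolding f'_def by (rule qeq_diff[OF ef qeq_refl])
      moreover have "(\<lambda>z. lam * f z - a * f z) = (\<lambda>z. (lam - a) * f z)"
        by (rule ext) (simp add: left_diff_distrib)
      ultimately have h3: "qeq pact (\<lambda>z. (lam - a) * f z) f'" by (simp add: qeq_sym)
      from qeq_trans[OF h3 h1] h2
      have "qeq pact (\<lambda>z. (lam - a) * f z) (\<lambda>z. (lam - a) * (if e z = lam then g z else 0))" by simp
      from qeq_scale[OF this, of "1 / (lam - a)"]
      have h4: "qeq pact (\<lambda>z. 1 / (lam - a) * ((lam - a) * f z))
         (\<lambda>z. 1 / (lam - a) * ((lam - a) * (if e z = lam then g z else 0)))" .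
      have nz: "lam - a \<noteq> 0" using a(2) by simp
      have "\<And>x::complex. 1 / (lam - a) * ((lam - a) * x) = x" using nz by simp
      then show ?thesis using h4 by simp
    qed
  qed
qed


fun mode :: "gen \<Rightarrow> int" where
  "mode (Jp n) = n" | "mode (Jm n) = n" | "mode (J0 n) = n" | "mode Kc = 0" | "mode Dd = 0"

fun ch :: "gen \<Rightarrow> int" where
  "ch (Jp n) = 2" | "ch (Jm n) = -2" | "ch (J0 n) = 0" | "ch Kc = 0" | "ch Dd = 0"

fun creat :: "gen \<Rightarrow> bool" where
  "creat (Jp n) = (n < 0)" | "creat (Jm n) = (n < 0)" | "creat (J0 n) = (n < 0)"
| "creat Kc = False" | "creat Dd = False"

lemma creat_in_p: "creat g \<longleftrightarrow> \<not> in_p g"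
  by (cases g) auto

definition NFs :: "(gen list \<times> 'b) set" where
  "NFs = {v. \<forall>g\<in>set (fst v). creat g}"

definition wt :: "('b \<Rightarrow> int) \<Rightarrow> gen list \<times> 'b \<Rightarrow> int \<times> int" where
  "wt qb v = (sum_list (map mode (fst v)), sum_list (map ch (fst v)) + qb (snd v))"

definition wtadd :: "gen \<Rightarrow> int \<times> int \<Rightarrow> int \<times> int" where
  "wtadd g p = (mode g + fst p, ch g + snd p)"

lemma wt_Cons: "wt qb (g # w, b) = wtadd g (wt qb (w, b))"
  by (simp add: wt_def wtadd_def)

lemma br_wt: "(c, h) \<in> set (br x y) \<Longrightarrow> mode h = mode x + mode y \<and> ch h = ch x + ch y"
  by (cases x; cases y) (auto split: if_splits)

definition goodw :: "(gen \<Rightarrow> 'b \<Rightarrow> (complex \<times> 'b) list) \<Rightarrow> ('b \<Rightarrow> int) \<Rightarrow> nat \<Rightarrow> int \<times> int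
   \<Rightarrow> (gen list \<times> 'b \<Rightarrow> complex) \<Rightarrow> bool" where
  "goodw pact qb L p f \<longleftrightarrow> (\<exists>g. fin_supp g \<and> (\<forall>v\<in>supp g. v \<in> NFs \<and> wt qb v = p \<and> length (fst v) \<le> L)
      \<and> qeq pact f g)"

lemma goodw_zero: "goodw pact qb L p (\<lambda>z. 0)"
  unfolding goodw_def by (rule exI[of _ "\<lambda>z. 0"]) (simp add: fin_supp_def supp_def qeq_refl)

lemma goodw_lin:
  assumes "goodw pact qb L p f" "goodw pact qb L p f'"
  shows "goodw pact qb L p (\<lambda>z. a * f z + f' z)"
proof -
  from assms obtain g g' where g: "fin_supp g" "\<forall>v\<in>supp g. v \<in> NFs \<and> wt qb v = p \<and> length (fst v) \<le> L" "qeq pact f g"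
    and g': "fin_supp g'" "\<forall>v\<in>supp g'. v \<in> NFs \<and> wt qb v = p \<and> length (fst v) \<le> L" "qeq pact f' g'"
    unfolding goodw_def by blast
  have sub: "supp (\<lambda>z. a * g z + g' z) \<subseteq> supp g \<union> supp g'" by (auto simp: supp_def)
  show ?thesis unfolding goodw_def
  proof (intro exI conjI)
    show "fin_supp (\<lambda>z. a * g z + g' z)" using g(1) g'(1) finite_subset[OF sub]
      by (simp add: fin_supp_iff)
    show "\<forall>v\<in>supp (\<lambda>z. a * g z + g' z). v \<in> NFs \<and> wt qb v = p \<and> length (fst v) \<le> L"
      using sub g(2) g'(2) by blast
    show "qeq pact (\<lambda>z. a * f z + f' z) (\<lambda>z. a * g z + g' z)"
      by (rule qeq_add[OF qeq_scale[OF g(3)] g'(3)])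
  qed
qed

lemma goodw_add:
  "goodw pact qb L p f \<Longrightarrow> goodw pact qb L p f' \<Longrightarrow> goodw pact qb L p (\<lambda>z. f z + f' z)"
  using goodw_lin[of pact qb L p f f' 1] by simp

lemma goodw_qeq: "qeq pact f f' \<Longrightarrow> goodw pact qb L p f' \<Longrightarrow> goodw pact qb L p f"
  unfolding goodw_def using qeq_trans by blast

lemma goodw_mono: "goodw pact qb L p f \<Longrightarrow> L \<le> L' \<Longrightarrow> goodw pact qb L' p f"
  unfolding goodw_def by fastforce

lemma goodw_pm: "v \<in> NFs \<Longrightarrow> goodw pact qb (length (fst v)) (wt qb v) (pm v)"
  unfolding goodw_def
  by (rule exI[of _ "pm v"]) (auto simp: fin_supp_def pm_def supp_def qeq_refl)

lemma lmul_pm: "lmul g (pm (w, b)) = pm (g # w, b)"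
  by (auto simp: lmul_def pm_def fun_eq_iff split: list.split)

lemma goodw_lmul:
  assumes "creat h" "goodw pact qb L p f"
  shows "goodw pact qb (Suc L) (wtadd h p) (lmul h f)"
proof -
  from assms(2) obtain g where g: "fin_supp g" "\<forall>v\<in>supp g. v \<in> NFs \<and> wt qb v = p \<and> length (fst v) \<le> L" "qeq pact f g"
    unfolding goodw_def by blast
  have sub: "supp (lmul h g) \<subseteq> (\<lambda>v. (h # fst v, snd v)) ` supp g"
  proof
    fix z assume "z \<in> supp (lmul h g)"
    then obtain u b where z: "z = (u, b)" and nz: "lmul h g (u, b) \<noteq> 0" by (cases z) (auto simp: supp_def)
    then obtain u' where "u = h # u'" "g (u', b) \<noteq> 0"
      by (cases u) (auto simp: lmul_app split: if_splits)
    then show "z \<in> (\<lambda>v. (h # fst v, snd v)) ` supp g" using z by (force simp: supp_def)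
  qed
  show ?thesis unfolding goodw_def
  proof (intro exI conjI)
    show "fin_supp (lmul h g)" using g(1) finite_subset[OF sub] by (simp add: fin_supp_iff)
    show "\<forall>v\<in>supp (lmul h g). v \<in> NFs \<and> wt qb v = wtadd h p \<and> length (fst v) \<le> Suc L"
    proof
      fix v assume "v \<in> supp (lmul h g)"
      with sub obtain v' where "v' \<in> supp g" "v = (h # fst v', snd v')" by blast
      with g(2) assms(1) show "v \<in> NFs \<and> wt qb v = wtadd h p \<and> length (fst v) \<le> Suc L"
        by (cases v') (auto simp: NFs_def wt_Cons)
    qed
    show "qeq pact (lmul h f) (lmul h g)" by (rule qeq_lmul[OF g(3)])
  qed
qed

lemma goodw_suml: "(\<And>c x. (c, x) \<in> set L \<Longrightarrow> goodw pact qb N p (F x))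
  \<Longrightarrow> goodw pact qb N p (\<lambda>z. \<Sum>(c, x)\<leftarrow>L. c * F x z)"
proof (induct L)
  case Nil then show ?case by (simp add: goodw_zero)
next
  case (Cons a L)
  obtain c x where a: "a = (c, x)" by (cases a)
  have "goodw pact qb N p (\<lambda>z. c * F x z + (\<Sum>(c, x)\<leftarrow>L. c * F x z))"
    by (rule goodw_lin) (use Cons a in auto)
  then show ?case by (simp add: a)
qed

lemma goodw_sum: "finite S \<Longrightarrow> (\<And>v. v \<in> S \<Longrightarrow> goodw pact qb N p (F v))
  \<Longrightarrow> goodw pact qb N p (\<lambda>z. \<Sum>v\<in>S. c v * F v z)"
proof (induct S rule: finite_induct)
  case empty then show ?case by (simp add: goodw_zero)
next
  case (insert x T)
  then show ?case using goodw_lin[of pact qb N p "F x" "\<lambda>z. \<Sum>v\<in>T. c v * F v z" "c x"] by simp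
qed

lemma lmul_sum: "finite S \<Longrightarrow> lmul g (\<lambda>z. \<Sum>v\<in>S. F v z) = (\<lambda>z. \<Sum>v\<in>S. lmul g (F v) z)"
proof (induct S rule: finite_induct)
  case empty then show ?case by (simp add: lmul_zero)
next
  case (insert x T)
  then show ?case using lmul_lin[of g 1 "F x"] by simp
qed

lemma comm_qeq:
  "qeq pact (pm (x # y # u, b)) (\<lambda>z. pm (y # x # u, b) z + (\<Sum>(c, h)\<leftarrow>br x y. c * pm (h # u, b) z))"
proof -
  have "(\<lambda>z. 1 * comm_gen [] x y u b z + 0) \<in> rel pact" by (rule rel_comm[OF rel_zero])
  moreover have "(\<lambda>z. 1 * comm_gen [] x y u b z + 0) =
     (\<lambda>z. pm (x # y # u, b) z - (pm (y # x # u, b) z + (\<Sum>(c, h)\<leftarrow>br x y. c * pm (h # u, b) z)))"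
    by (simp add: comm_gen_def word_pm fun_eq_iff)
  ultimately show ?thesis by (simp add: qeq_def)
qed

lemma ind_qeq: "in_p x \<Longrightarrow>
  qeq pact (pm ([x], b)) (\<lambda>z. \<Sum>(c, b')\<leftarrow>pact x b. c * pm ([], b') z)"
proof -
  assume x: "in_p x"
  have "(\<lambda>z. 1 * ind_gen pact [] x b z + 0) \<in> rel pact" by (rule rel_ind[OF x rel_zero])
  moreover have "(\<lambda>z. 1 * ind_gen pact [] x b z + 0) =
     (\<lambda>z. pm ([x], b) z - (\<Sum>(c, b')\<leftarrow>pact x b. c * pm ([], b') z))"
    by (simp add: ind_gen_def word_pm fun_eq_iff)
  ultimately show ?thesis by (simp add: qeq_def)
qed


definition good0 :: "(gen \<Rightarrow> 'b \<Rightarrow> (complex \<times> 'b) list) \<Rightarrow> (gen list \<times> 'b \<Rightarrow> complex) \<Rightarrow> bool" where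
  "good0 pact f \<longleftrightarrow> (\<exists>g. fin_supp g \<and> supp g \<subseteq> NFs \<and> qeq pact f g)"

lemma goodw_good0: "goodw pact qb L p f \<Longrightarrow> good0 pact f"
  unfolding goodw_def good0_def by blast

lemma good0_zero: "good0 pact (\<lambda>z. 0)"
  unfolding good0_def by (rule exI[of _ "\<lambda>z. 0"]) (simp add: fin_supp_def supp_def qeq_refl)

lemma good0_lin:
  assumes "good0 pact f" "good0 pact f'"
  shows "good0 pact (\<lambda>z. a * f z + f' z)"
proof -
  from assms obtain g g' where g: "fin_supp g" "supp g \<subseteq> NFs" "qeq pact f g"
    and g': "fin_supp g'" "supp g' \<subseteq> NFs" "qeq pact f' g'"
    unfolding good0_def by blast
  have sub: "supp (\<lambda>z. a * g z + g' z) \<subseteq> supp g \<union> supp g'" by (auto simp: supp_def)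
  show ?thesis unfolding good0_def
  proof (intro exI conjI)
    show "fin_supp (\<lambda>z. a * g z + g' z)" using g(1) g'(1) finite_subset[OF sub]
      by (simp add: fin_supp_iff)
    show "supp (\<lambda>z. a * g z + g' z) \<subseteq> NFs" using sub g(2) g'(2) by blast
    show "qeq pact (\<lambda>z. a * f z + f' z) (\<lambda>z. a * g z + g' z)"
      by (rule qeq_add[OF qeq_scale[OF g(3)] g'(3)])
  qed
qed

lemma good0_sum: "finite S \<Longrightarrow> (\<And>v. v \<in> S \<Longrightarrow> good0 pact (F v))
  \<Longrightarrow> good0 pact (\<lambda>z. \<Sum>v\<in>S. c v * F v z)"
proof (induct S rule: finite_induct)
  case empty then show ?case by (simp add: good0_zero)
next
  case (insert x T)
  then show ?case using good0_lin[of pact "F x" "\<lambda>z. \<Sum>v\<in>T. c v * F v z" "c x"] by simp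
qed

lemma eig_word:
  fixes X :: gen and e :: "gen \<Rightarrow> complex" and e0 :: "'b \<Rightarrow> complex" and w :: "gen list" and b :: 'b
    and pact :: "gen \<Rightarrow> 'b \<Rightarrow> (complex \<times> 'b) list"
  assumes base: "\<And>b. qeq pact (pm ([X], b)) (\<lambda>z. e0 b * pm ([], b) z)"
    and brs: "\<And>g u (b::'b). (\<lambda>z. \<Sum>(c, h)\<leftarrow>br X g. c * pm (h # u, b) z) = (\<lambda>z. e g * pm (g # u, b) z)"
  shows "qeq pact (pm (X # w, b)) (\<lambda>z. (sum_list (map e w) + e0 b) * pm (w, b) z)"
proof (induct w)
  case Nil then show ?case using base by simp
next
  case (Cons g w)
  have e1: "\<forall>z. (\<Sum>(c, h)\<leftarrow>br X g. c * pm (h # w, b) z) = e g * pm (g # w, b) z"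
    using brs[of w b g] by (simp add: fun_eq_iff)
  have A1: "qeq pact (pm (X # g # w, b)) (\<lambda>z. pm (g # X # w, b) z + e g * pm (g # w, b) z)"
  proof -
    have "qeq pact (pm (X # g # w, b)) (\<lambda>z. pm (g # X # w, b) z + (\<Sum>(c, h)\<leftarrow>br X g. c * pm (h # w, b) z))"
      by (rule comm_qeq)
    then show ?thesis using e1 by simp
  qed
  have A2: "qeq pact (\<lambda>z. pm (g # X # w, b) z + e g * pm (g # w, b) z)
     (\<lambda>z. (sum_list (map e w) + e0 b) * pm (g # w, b) z + e g * pm (g # w, b) z)"
    using qeq_add[OF qeq_lmul[OF Cons, of g] qeq_refl[of pact "\<lambda>z. e g * pm (g # w, b) z"]]
    by (simp add: lmul_pm lmul_scale)
  have A3: "(\<lambda>z. (sum_list (map e w) + e0 b) * pm (g # w, b) z + e g * pm (g # w, b) z)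
     = (\<lambda>z. (sum_list (map e (g # w)) + e0 b) * pm (g # w, b) z)"
    by (simp add: fun_eq_iff algebra_simps)
  show ?case using qeq_trans[OF A1 A2] unfolding A3 .
qed

lemma brs_D: "(\<lambda>z. \<Sum>(c, h)\<leftarrow>br Dd g. c * pm (h # u, b) z) = (\<lambda>z. of_int (mode g) * pm (g # u, b) z)"
  by (cases g) (auto simp: fun_eq_iff)

lemma brs_J: "(\<lambda>z. \<Sum>(c, h)\<leftarrow>br (J0 0) g. c * pm (h # u, b) z) = (\<lambda>z. of_int (ch g) * pm (g # u, b) z)"
  by (cases g) (auto simp: fun_eq_iff)

lemma brs_K: "(\<lambda>z. \<Sum>(c, h)\<leftarrow>br Kc g. c * pm (h # u, b) z) = (\<lambda>z. 0 * pm (g # u, b) z)"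
  by (cases g) (auto simp: fun_eq_iff)

lemma sum_of_int_map: "sum_list (map (\<lambda>g. (of_int (f g) :: complex)) w) = of_int (sum_list (map f w))"
  by (induct w) auto

lemma sum_zero_map: "sum_list (map (\<lambda>g. (0 :: complex)) w) = 0"
  by (induct w) auto

lemma nf_bounds: "(\<forall>g\<in>set w. creat g) \<Longrightarrow> sum_list (map mode w) \<le> - int (length w)
  \<and> (\<forall>g\<in>set w. sum_list (map mode w) \<le> mode g) \<and> \<bar>sum_list (map ch w)\<bar> \<le> 2 * int (length w)"
proof (induct w)
  case Nil then show ?case by simp
next
  case (Cons g w)
  have "mode g \<le> -1" "\<bar>ch g\<bar> \<le> 2" using Cons(2) by (cases g; auto)+
  then show ?case using Cons by auto
qed

lemma finite_NF_wt:
  assumes inj: "inj qb"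
  shows "finite {v \<in> NFs. wt qb v = p}"
proof -
  obtain a c where p: "p = (a, c)" by (cases p)
  define Ln where "Ln = nat (- a)"
  define G where "G = Jp ` {a..-1} \<union> Jm ` {a..-1} \<union> J0 ` {a..-1}"
  have fG: "finite G" by (simp add: G_def)
  have fb: "finite (qb -` {c - 2 * int Ln .. c + 2 * int Ln})"
    by (rule finite_vimageI[OF _ inj]) simp
  have "{v \<in> NFs. wt qb v = p} \<subseteq> {w. set w \<subseteq> G \<and> length w \<le> Ln} \<times> (qb -` {c - 2 * int Ln .. c + 2 * int Ln})"
  proof
    fix v assume v: "v \<in> {v \<in> NFs. wt qb v = p}"
    obtain w b where vw: "v = (w, b)" by (cases v)
    have cr: "\<forall>g\<in>set w. creat g" using v vw by (simp add: NFs_def)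
    have ms: "sum_list (map mode w) = a" and cs: "sum_list (map ch w) + qb b = c"
      using v vw p by (simp_all add: wt_def)
    note bd = nf_bounds[OF cr]
    have len: "length w \<le> Ln" using bd ms unfolding Ln_def by linarith
    have "set w \<subseteq> G"
    proof
      fix g assume g: "g \<in> set w"
      have "a \<le> mode g" "creat g" using bd g ms cr by auto
      then show "g \<in> G" unfolding G_def by (cases g) (simp_all add: image_iff)
    qed
    moreover have "qb b \<in> {c - 2 * int Ln .. c + 2 * int Ln}"
    proof -
      have "\<bar>sum_list (map ch w)\<bar> \<le> 2 * int Ln" using bd len by linarith
      then show ?thesis using cs by (simp add: abs_le_iff)
    qed
    ultimately show "v \<in> {w. set w \<subseteq> G \<and> length w \<le> Ln} \<times> (qb -` {c - 2 * int Ln .. c + 2 * int Ln})"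
      using len vw by simp
  qed
  moreover have "finite ({w. set w \<subseteq> G \<and> length w \<le> Ln} \<times> (qb -` {c - 2 * int Ln .. c + 2 * int Ln}))"
    using finite_lists_length_le[OF fG] fb by simp
  ultimately show ?thesis using finite_subset by blast
qed


lemma lmul_pm': "lmul g (pm v) = pm (g # fst v, snd v)"
  using lmul_pm[of g "fst v" "snd v"] by simp

locale gsetup =
  fixes pact :: "gen \<Rightarrow> 'b \<Rightarrow> (complex \<times> 'b) list" and qb :: "'b \<Rightarrow> int" and dl kk q0c :: complex
  assumes inj_qb: "inj qb"
    and pact_wt: "\<And>x b c b'. in_p x \<Longrightarrow> (c, b') \<in> set (pact x b) \<Longrightarrow> mode x = 0 \<and> qb b' = qb b + ch x"
    and eig_D: "\<And>b. qeq pact (pm ([Dd], b)) (\<lambda>z. dl * pm ([], b) z)"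
    and eig_J: "\<And>b. qeq pact (pm ([J0 0], b)) (\<lambda>z. (of_int (qb b) + q0c) * pm ([], b) z)"
    and eig_K: "\<And>b. qeq pact (pm ([Kc], b)) (\<lambda>z. kk * pm ([], b) z)"
begin

lemma NO_aux: "\<forall>w b. length w = n \<longrightarrow> goodw pact qb (length w) (wt qb (w, b)) (pm (w, b))"
proof (induct n rule: less_induct)
  case (less n)
  have IH: "\<And>w b. length w < n \<Longrightarrow> goodw pact qb (length w) (wt qb (w, b)) (pm (w, b))"
    using less by blast
  have MOVE: "\<forall>u. (\<forall>g\<in>set u. creat g) \<longrightarrow> length u < n \<longrightarrow>
      goodw pact qb (Suc (length u)) (wtadd x (wt qb (u, b))) (pm (x # u, b))" if x: "in_p x" for x b
  proof
    fix u show "(\<forall>g\<in>set u. creat g) \<longrightarrow> length u < n \<longrightarrow>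
      goodw pact qb (Suc (length u)) (wtadd x (wt qb (u, b))) (pm (x # u, b))"
    proof (induct u)
      case Nil
      show ?case
      proof (intro impI)
        have "goodw pact qb (Suc 0) (wtadd x (wt qb ([], b))) (\<lambda>z. \<Sum>(c, b')\<leftarrow>pact x b. c * pm ([], b') z)"
        proof (rule goodw_suml)
          fix c b' assume cb: "(c, b') \<in> set (pact x b)"
          have "goodw pact qb 0 (wt qb ([], b')) (pm ([], b'))"
            using goodw_pm[of "([], b')"] by (simp add: NFs_def)
          moreover have "wt qb ([], b') = wtadd x (wt qb ([], b))"
            using pact_wt[OF x cb] by (simp add: wt_def wtadd_def)
          ultimately show "goodw pact qb (Suc 0) (wtadd x (wt qb ([], b))) (pm ([], b'))"
            using goodw_mono by fastforce
        qed
        then show "goodw pact qb (Suc (length [])) (wtadd x (wt qb ([], b))) (pm ([x], b))"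
          using goodw_qeq[OF ind_qeq[OF x]] by simp
      qed
    next
      case (Cons h u)
      show ?case
      proof (intro impI)
        assume cr: "\<forall>g\<in>set (h # u). creat g" and ln: "length (h # u) < n"
        have ih: "goodw pact qb (Suc (length u)) (wtadd x (wt qb (u, b))) (pm (x # u, b))"
          using Cons cr ln by simp
        have t1: "goodw pact qb (Suc (length (h # u))) (wtadd x (wt qb (h # u, b))) (pm (h # x # u, b))"
        proof -
          have "creat h" using cr by simp
          from goodw_lmul[OF this ih]
          have "goodw pact qb (Suc (Suc (length u))) (wtadd h (wtadd x (wt qb (u, b)))) (lmul h (pm (x # u, b)))" .
          moreover have "wtadd h (wtadd x (wt qb (u, b))) = wtadd x (wt qb (h # u, b))"
            by (simp add: wt_Cons wtadd_def)
          ultimately show ?thesis by (simp add: lmul_pm)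
        qed
        have t2: "goodw pact qb (Suc (length (h # u))) (wtadd x (wt qb (h # u, b)))
            (\<lambda>z. \<Sum>(c, y)\<leftarrow>br x h. c * pm (y # u, b) z)"
        proof (rule goodw_suml)
          fix c y assume cy: "(c, y) \<in> set (br x h)"
          have "goodw pact qb (length (y # u)) (wt qb (y # u, b)) (pm (y # u, b))"
            using IH[of "y # u" b] ln by simp
          moreover have "wt qb (y # u, b) = wtadd x (wt qb (h # u, b))"
            using br_wt[OF cy] by (simp add: wt_Cons wtadd_def)
          ultimately show "goodw pact qb (Suc (length (h # u))) (wtadd x (wt qb (h # u, b))) (pm (y # u, b))"
            using goodw_mono[of pact qb "length (y # u)"] by fastforce
        qed
        show "goodw pact qb (Suc (length (h # u))) (wtadd x (wt qb (h # u, b))) (pm (x # h # u, b))"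
          by (rule goodw_qeq[OF comm_qeq goodw_add[OF t1 t2]])
      qed
    qed
  qed
  show ?case
  proof (intro allI impI)
    fix w :: "gen list" and b :: 'b assume lw: "length w = n"
    show "goodw pact qb (length w) (wt qb (w, b)) (pm (w, b))"
    proof (cases w)
      case Nil then show ?thesis using goodw_pm[of "([], b)"] by (simp add: NFs_def)
    next
      case (Cons g w')
      have ih: "goodw pact qb (length w') (wt qb (w', b)) (pm (w', b))" using IH lw Cons by simp
      show ?thesis
      proof (cases "creat g")
        case True
        from goodw_lmul[OF True ih] show ?thesis by (simp add: Cons lmul_pm wt_Cons)
      next
        case False
        then have x: "in_p g" by (simp add: creat_in_p)
        from ih obtain G where G: "fin_supp G"
          "\<forall>v\<in>supp G. v \<in> NFs \<and> wt qb v = wt qb (w', b) \<and> length (fst v) \<le> length w'"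
          "qeq pact (pm (w', b)) G" unfolding goodw_def by blast
        have fin: "finite (supp G)" using G(1) by (simp add: fin_supp_iff)
        have "lmul g G = lmul g (\<lambda>z. \<Sum>v\<in>supp G. G v * pm v z)" using expand[OF fin] by simp
        also have "\<dots> = (\<lambda>z. \<Sum>v\<in>supp G. G v * pm (g # fst v, snd v) z)"
          by (simp add: lmul_sum[OF fin] lmul_scale lmul_pm')
        finally have lg: "lmul g G = (\<lambda>z. \<Sum>v\<in>supp G. G v * pm (g # fst v, snd v) z)" .
        have "goodw pact qb (length w) (wt qb (w, b)) (\<lambda>z. \<Sum>v\<in>supp G. G v * pm (g # fst v, snd v) z)"
        proof (rule goodw_sum[OF fin])
          fix v assume v: "v \<in> supp G"
          have cr: "\<forall>g\<in>set (fst v). creat g" using G(2) v by (simp add: NFs_def)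
          have lv: "length (fst v) < n" using G(2) v lw Cons by auto
          have "goodw pact qb (Suc (length (fst v))) (wtadd g (wt qb (fst v, snd v))) (pm (g # fst v, snd v))"
            using MOVE[OF x, of "snd v"] cr lv by blast
          moreover have "wt qb (fst v, snd v) = wt qb (w', b)" using G(2) v by simp
          moreover have "Suc (length (fst v)) \<le> length w" using G(2) v Cons by auto
          ultimately show "goodw pact qb (length w) (wt qb (w, b)) (pm (g # fst v, snd v))"
            using goodw_mono Cons by (simp add: wt_Cons) blast
        qed
        then show ?thesis using goodw_qeq[OF qeq_lmul[OF G(3), of g]] lg by (simp add: Cons lmul_pm)
      qed
    qed
  qed
qed

lemma NO: "goodw pact qb (length w) (wt qb (w, b)) (pm (w, b))"
  using NO_aux by blast

lemma good0_all: "fin_supp f \<Longrightarrow> good0 pact f"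
proof -
  assume "fin_supp f"
  then have fin: "finite (supp f)" by (simp add: fin_supp_iff)
  have "good0 pact (\<lambda>z. \<Sum>v\<in>supp f. f v * pm v z)"
  proof (rule good0_sum[OF fin])
    fix v :: "gen list \<times> 'b"
    show "good0 pact (pm v)" using goodw_good0[OF NO[of "fst v" "snd v"]] by simp
  qed
  then show ?thesis using expand[OF fin] by simp
qed

definition alpha :: "int \<Rightarrow> int \<times> int \<Rightarrow> complex" where
  "alpha s p = (of_int (fst p) + dl) + of_int s / 2 * (of_int (snd p) + q0c) + (- ((of_int s) ^ 2) / 4) * kk"

definition beta :: "int \<Rightarrow> int \<times> int \<Rightarrow> complex" where
  "beta s p = (of_int (snd p) + q0c) + (- of_int s) * kk"

lemma eigD: "qeq pact (act_lc (flow s Dd) (pm v)) (\<lambda>z. alpha s (wt qb v) * pm v z)"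
proof -
  obtain w b where v: "v = (w, b)" by (cases v)
  have A0: "qeq pact (pm (Dd # w, b)) (\<lambda>z. (sum_list (map (\<lambda>g. of_int (mode g)) w) + dl) * pm (w, b) z)"
    by (rule eig_word[OF eig_D brs_D])
  have A: "qeq pact (pm (Dd # w, b)) (\<lambda>z. (of_int (sum_list (map mode w)) + dl) * pm (w, b) z)"
    using A0 by (simp add: sum_of_int_map)
  have B0: "qeq pact (pm (J0 0 # w, b)) (\<lambda>z. (sum_list (map (\<lambda>g. of_int (ch g)) w) + (of_int (qb b) + q0c)) * pm (w, b) z)"
    by (rule eig_word[OF eig_J brs_J])
  have B: "qeq pact (pm (J0 0 # w, b)) (\<lambda>z. (of_int (sum_list (map ch w)) + (of_int (qb b) + q0c)) * pm (w, b) z)"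
    using B0 by (simp add: sum_of_int_map)
  have C0: "qeq pact (pm (Kc # w, b)) (\<lambda>z. (sum_list (map (\<lambda>g. 0) w) + kk) * pm (w, b) z)"
    by (rule eig_word[OF eig_K brs_K])
  have C: "qeq pact (pm (Kc # w, b)) (\<lambda>z. kk * pm (w, b) z)"
    using C0 by (simp add: sum_zero_map)
  have act: "act_lc (flow s Dd) (pm (w, b)) = (\<lambda>z. pm (Dd # w, b) z + (of_int s / 2 * pm (J0 0 # w, b) z
      + (- (of_int s ^ 2) / 4) * pm (Kc # w, b) z))"
    by (simp add: lmul_pm)
  have Q: "qeq pact (\<lambda>z. pm (Dd # w, b) z + (of_int s / 2 * pm (J0 0 # w, b) z
      + (- (of_int s ^ 2) / 4) * pm (Kc # w, b) z))
    (\<lambda>z. (of_int (sum_list (map mode w)) + dl) * pm (w, b) z + (of_int s / 2 * ((of_int (sum_list (map ch w))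
      + (of_int (qb b) + q0c)) * pm (w, b) z) + (- (of_int s ^ 2) / 4) * (kk * pm (w, b) z)))"
    by (rule qeq_add[OF A qeq_add[OF qeq_scale[OF B] qeq_scale[OF C]]])
  have E: "(\<lambda>z. (of_int (sum_list (map mode w)) + dl) * pm (w, b) z + (of_int s / 2 * ((of_int (sum_list (map ch w))
      + (of_int (qb b) + q0c)) * pm (w, b) z) + (- (of_int s ^ 2) / 4) * (kk * pm (w, b) z)))
    = (\<lambda>z. alpha s (wt qb (w, b)) * pm (w, b) z)"
    by (simp add: fun_eq_iff alpha_def wt_def algebra_simps)
  show ?thesis using Q unfolding v act E .
qed

lemma eigJ: "qeq pact (act_lc (flow s (J0 0)) (pm v)) (\<lambda>z. beta s (wt qb v) * pm v z)"
proof -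
  obtain w b where v: "v = (w, b)" by (cases v)
  have B0: "qeq pact (pm (J0 0 # w, b)) (\<lambda>z. (sum_list (map (\<lambda>g. of_int (ch g)) w) + (of_int (qb b) + q0c)) * pm (w, b) z)"
    by (rule eig_word[OF eig_J brs_J])
  have B: "qeq pact (pm (J0 0 # w, b)) (\<lambda>z. (of_int (sum_list (map ch w)) + (of_int (qb b) + q0c)) * pm (w, b) z)"
    using B0 by (simp add: sum_of_int_map)
  have C0: "qeq pact (pm (Kc # w, b)) (\<lambda>z. (sum_list (map (\<lambda>g. 0) w) + kk) * pm (w, b) z)"
    by (rule eig_word[OF eig_K brs_K])
  have C: "qeq pact (pm (Kc # w, b)) (\<lambda>z. kk * pm (w, b) z)"
    using C0 by (simp add: sum_zero_map)
  have act: "act_lc (flow s (J0 0)) (pm (w, b)) = (\<lambda>z. pm (J0 0 # w, b) z + (- of_int s) * pm (Kc # w, b) z)"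
    by (simp add: lmul_pm)
  have Q: "qeq pact (\<lambda>z. pm (J0 0 # w, b) z + (- of_int s) * pm (Kc # w, b) z)
    (\<lambda>z. (of_int (sum_list (map ch w)) + (of_int (qb b) + q0c)) * pm (w, b) z + (- of_int s) * (kk * pm (w, b) z))"
    by (rule qeq_add[OF B qeq_scale[OF C]])
  have E: "(\<lambda>z. (of_int (sum_list (map ch w)) + (of_int (qb b) + q0c)) * pm (w, b) z + (- of_int s) * (kk * pm (w, b) z))
    = (\<lambda>z. beta s (wt qb (w, b)) * pm (w, b) z)"
    by (simp add: fun_eq_iff beta_def wt_def algebra_simps)
  show ?thesis using Q unfolding v act E .
qed

lemma ab_inj: "alpha s p = alpha s p' \<Longrightarrow> beta s p = beta s p' \<Longrightarrow> p = p'"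
proof -
  assume a: "alpha s p = alpha s p'" and b: "beta s p = beta s p'"
  from b have "(of_int (snd p) :: complex) = of_int (snd p')" by (simp add: beta_def)
  then have s2: "snd p = snd p'" by simp
  from a s2 have "(of_int (fst p) :: complex) = of_int (fst p')" by (simp add: alpha_def)
  then have "fst p = fst p'" by simp
  with s2 show "p = p'" by (simp add: prod_eq_iff)
qed

lemma pm_inj: "inj pm"
proof (rule injI)
  fix v v' :: "gen list \<times> 'c" assume "pm v = pm v'"
  then have "pm v v = pm v' v" by simp
  then show "v = v'" by (simp add: pm_def split: if_splits)
qed

lemma key:
  assumes f: "f \<in> Vmn pact s delta0 q0 m n"
  shows "\<exists>G. fin_supp G \<and> supp G \<subseteq> {v \<in> NFs. alpha s (wt qb v) = delta0 - of_int m
      \<and> beta s (wt qb v) = q0 + 2 * of_int n} \<and> qeq pact f G"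
proof -
  from f have fs: "fin_supp f"
    and hD: "qeq pact (act_lc (flow s Dd) f) (\<lambda>z. (delta0 - of_int m) * f z)"
    and hJ: "qeq pact (act_lc (flow s (J0 0)) f) (\<lambda>z. (q0 + 2 * of_int n) * f z)"
    by (simp_all add: Vmn_def flow_act_def)
  from good0_all[OF fs] obtain G where G: "fin_supp G" "supp G \<subseteq> NFs" "qeq pact f G"
    unfolding good0_def by blast
  define G1 where "G1 = (\<lambda>v. if alpha s (wt qb v) = delta0 - of_int m then G v else 0)"
  have f1: "qeq pact f G1"
    unfolding G1_def
    using sep_aux[OF eigD, rule_format, OF refl G(1) G(3) hD] .
  have s1: "supp G1 \<subseteq> supp G" by (auto simp: G1_def supp_def)
  have fs1: "fin_supp G1" using G(1) finite_subset[OF s1] by (simp add: fin_supp_iff)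
  define G2 where "G2 = (\<lambda>v. if beta s (wt qb v) = q0 + 2 * of_int n then G1 v else 0)"
  have f2: "qeq pact f G2"
    unfolding G2_def
    using sep_aux[OF eigJ, rule_format, OF refl fs1 f1 hJ] .
  have s2: "supp G2 \<subseteq> {v \<in> NFs. alpha s (wt qb v) = delta0 - of_int m
      \<and> beta s (wt qb v) = q0 + 2 * of_int n}"
    using G(2) by (auto simp: G2_def G1_def supp_def split: if_splits)
  have "supp G2 \<subseteq> supp G1" by (auto simp: G2_def supp_def)
  then have "fin_supp G2" using fs1 finite_subset by (auto simp: fin_supp_iff)
  with s2 f2 show ?thesis by blast
qed

lemma finS: "finite {v \<in> NFs. alpha s (wt qb v) = a \<and> beta s (wt qb v) = c}"
proof (cases "{v \<in> NFs. alpha s (wt qb v) = a \<and> beta s (wt qb v) = c} = {}")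
  case True then show ?thesis by (subst True) simp
next
  case False
  then obtain v1 where v1: "v1 \<in> NFs" "alpha s (wt qb v1) = a" "beta s (wt qb v1) = c" by blast
  have "{v \<in> NFs. alpha s (wt qb v) = a \<and> beta s (wt qb v) = c} \<subseteq> {v \<in> NFs. wt qb v = wt qb v1}"
  proof
    fix v assume "v \<in> {v \<in> NFs. alpha s (wt qb v) = a \<and> beta s (wt qb v) = c}"
    then have "v \<in> NFs" "alpha s (wt qb v) = alpha s (wt qb v1)" "beta s (wt qb v) = beta s (wt qb v1)"
      using v1 by auto
    then show "v \<in> {v \<in> NFs. wt qb v = wt qb v1}" using ab_inj[of s "wt qb v" "wt qb v1"] by simp
  qed
  then show ?thesis using finite_NF_wt[OF inj_qb] finite_subset by blast
qed

lemma main: "grading_props pact b0 s"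
  unfolding grading_props_def
proof (intro allI impI, rule conjI)
  fix delta0 q0 :: complex
  show "\<forall>m n. \<exists>B. finite B \<and> (\<forall>f\<in>Vmn pact s delta0 q0 m n. \<exists>g\<in>cspan B. qeq pact f g)"
  proof (intro allI)
    fix m n :: int
    define S where "S = {v \<in> NFs. alpha s (wt qb v) = delta0 - of_int m \<and> beta s (wt qb v) = q0 + 2 * of_int n}"
    have fS: "finite S" unfolding S_def by (rule finS)
    show "\<exists>B. finite B \<and> (\<forall>f\<in>Vmn pact s delta0 q0 m n. \<exists>g\<in>cspan B. qeq pact f g)"
    proof (intro exI conjI ballI)
      show "finite (pm ` S)" using fS by simp
      fix f assume "f \<in> Vmn pact s delta0 q0 m n"
      from key[OF this] obtain G where G: "supp G \<subseteq> S" "qeq pact f G" unfolding S_def by blast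
      have "G \<in> cspan (pm ` S)"
        unfolding cspan_def
      proof (intro CollectI exI[of _ "\<lambda>\<phi>. G (inv pm \<phi>)"])
        have "(\<lambda>z. \<Sum>\<phi>\<in>pm ` S. G (inv pm \<phi>) * \<phi> z) = (\<lambda>z. \<Sum>v\<in>S. G (inv pm (pm v)) * pm v z)"
          by (subst sum.reindex) (auto intro: inj_on_subset[OF pm_inj])
        also have "\<dots> = (\<lambda>z. \<Sum>v\<in>S. G v * pm v z)" by (simp add: inv_f_f[OF pm_inj])
        also have "\<dots> = G" by (rule expand[OF fS G(1)])
        finally show "G = (\<lambda>z. \<Sum>\<phi>\<in>pm ` S. G (inv pm \<phi>) * \<phi> z)" by simp
      qed
      then show "\<exists>g\<in>cspan (pm ` S). qeq pact f g" using G(2) by blast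
    qed
  qed
  show "\<forall>n. \<exists>N. \<forall>m\<le>N. \<forall>f\<in>Vmn pact s delta0 q0 m n. f \<in> rel pact"
  proof (intro allI)
    fix n :: int
    define C where "C = dl + of_int s / 2 * (q0 + 2 * of_int n + of_int s * kk) + (- (of_int s ^ 2) / 4) * kk"
    define N where "N = \<lfloor>Re delta0 - Re C\<rfloor> - 1"
    show "\<exists>N. \<forall>m\<le>N. \<forall>f\<in>Vmn pact s delta0 q0 m n. f \<in> rel pact"
    proof (intro exI allI impI ballI)
      fix m f assume mN: "m \<le> N" and f: "f \<in> Vmn pact s delta0 q0 m n"
      from key[OF f] obtain G where G: "supp G \<subseteq> {v \<in> NFs. alpha s (wt qb v) = delta0 - of_int m
      \<and> beta s (wt qb v) = q0 + 2 * of_int n}" "qeq pact f G" by blast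
      have empty: "supp G = {}"
      proof (rule ccontr)
        assume "supp G \<noteq> {}"
        then obtain v where "v \<in> supp G" by blast
        with G(1) have v: "v \<in> NFs" "alpha s (wt qb v) = delta0 - of_int m" "beta s (wt qb v) = q0 + 2 * of_int n"
          by auto
        obtain p1 p2 where p: "wt qb v = (p1, p2)" by (cases "wt qb v")
        have "p1 \<le> 0"
          using nf_bounds[of "fst v"] v(1) p by (auto simp: NFs_def wt_def)
        from v(3) p have b: "of_int p2 + q0c = q0 + 2 * of_int n + of_int s * kk"
          by (simp add: beta_def algebra_simps)
        from v(2) p have "of_int p1 + dl + of_int s / 2 * (of_int p2 + q0c) + (- (of_int s ^ 2) / 4) * kk = delta0 - of_int m"
          by (simp add: alpha_def)
        then have "of_int p1 + C = delta0 - of_int m" unfolding C_def b by (simp add: algebra_simps)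
        then have "Re (of_int p1 + C) = Re (delta0 - of_int m)" by simp
        then have "real_of_int p1 + Re C = Re delta0 - real_of_int m" by simp
        moreover have "real_of_int m \<le> real_of_int N" using mN by simp
        moreover have "real_of_int N \<le> Re delta0 - Re C - 1" unfolding N_def
          using of_int_floor_le[of "Re delta0 - Re C"] by simp
        ultimately have "real_of_int p1 \<ge> 1" by linarith
        with \<open>p1 \<le> 0\<close> show False by simp
      qed
      then have "G = (\<lambda>z. 0)" by (auto simp: supp_def fun_eq_iff)
      with G(2) show "f \<in> rel pact" by (simp add: qeq_def)
    qed
  qed
qed

end

lemma ind_eig:
  assumes "in_p x" and "pact x b = [(e, b)]"
  shows "qeq pact (pm ([x], b)) (\<lambda>z. e * pm ([], b) z)"
proof -
  have "qeq pact (pm ([x], b)) (\<lambda>z. \<Sum>(c, b')\<leftarrow>pact x b. c * pm ([], b') z)"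
    by (rule ind_qeq[OF assms(1)])
  then show ?thesis using assms(2) by simp
qed

lemma ind_eig0:
  assumes "in_p x" and "pact x b = []"
  shows "qeq pact (pm ([x], b)) (\<lambda>z. 0 * pm ([], b) z)"
proof -
  have "qeq pact (pm ([x], b)) (\<lambda>z. \<Sum>(c, b')\<leftarrow>pact x b. c * pm ([], b') z)"
    by (rule ind_qeq[OF assms(1)])
  then show ?thesis using assms(2) by simp
qed

lemma triv_setup: "gsetup (pact_triv k) (\<lambda>_. 0) 0 (of_int k) 0"
proof (rule gsetup.intro)
  show "inj (\<lambda>_::unit. 0::int)" by (simp add: inj_def)
  show "\<And>x b c b'. in_p x \<Longrightarrow> (c, b') \<in> set (pact_triv k x b) \<Longrightarrow> mode x = 0 \<and> 0 = 0 + ch x"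
    by (case_tac x) auto
  show "\<And>b. qeq (pact_triv k) (pm ([Dd], b)) (\<lambda>z. 0 * pm ([], b) z)"
    by (rule ind_eig0) auto
  show "\<And>b. qeq (pact_triv k) (pm ([J0 0], b)) (\<lambda>z. (of_int 0 + 0) * pm ([], b) z)"
    using ind_eig0[of "J0 0" "pact_triv k"] by simp
  show "\<And>b. qeq (pact_triv k) (pm ([Kc], b)) (\<lambda>z. of_int k * pm ([], b) z)"
    by (rule ind_eig) auto
qed

lemma plus_setup: "gsetup (pact_plus k j) (\<lambda>m. 2 * int m) (of_real (delta_j k j)) (of_int k) (of_real (- 2 * j))"
proof (rule gsetup.intro)
  show "inj (\<lambda>m::nat. 2 * int m)" by (simp add: inj_def)
  show "\<And>x b c b'. in_p x \<Longrightarrow> (c, b') \<in> set (pact_plus k j x b) \<Longrightarrow> mode x = 0 \<and> 2 * int b' = 2 * int b + ch x"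
    by (case_tac x) (auto split: if_splits)
  show "\<And>b. qeq (pact_plus k j) (pm ([Dd], b)) (\<lambda>z. of_real (delta_j k j) * pm ([], b) z)"
    by (rule ind_eig) auto
  show "\<And>b. qeq (pact_plus k j) (pm ([J0 0], b)) (\<lambda>z. (of_int (2 * int b) + of_real (- 2 * j)) * pm ([], b) z)"
  proof -
    fix b
    have "qeq (pact_plus k j) (pm ([J0 0], b)) (\<lambda>z. of_real (2 * (real b - j)) * pm ([], b) z)"
      by (rule ind_eig) auto
    moreover have "(of_real (2 * (real b - j)) :: complex) = of_int (2 * int b) + of_real (- 2 * j)"
      by simp
    ultimately show "qeq (pact_plus k j) (pm ([J0 0], b)) (\<lambda>z. (of_int (2 * int b) + of_real (- 2 * j)) * pm ([], b) z)"
      by simp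
  qed
  show "\<And>b. qeq (pact_plus k j) (pm ([Kc], b)) (\<lambda>z. of_int k * pm ([], b) z)"
    by (rule ind_eig) auto
qed

lemma minus_setup: "gsetup (pact_minus k j) (\<lambda>m. - 2 * int m) (of_real (delta_j k j)) (of_int k) (of_real (2 * j))"
proof (rule gsetup.intro)
  show "inj (\<lambda>m::nat. - 2 * int m)" by (simp add: inj_def)
  show "\<And>x b c b'. in_p x \<Longrightarrow> (c, b') \<in> set (pact_minus k j x b) \<Longrightarrow> mode x = 0 \<and> - 2 * int b' = - 2 * int b + ch x"
    by (case_tac x) (auto split: if_splits)
  show "\<And>b. qeq (pact_minus k j) (pm ([Dd], b)) (\<lambda>z. of_real (delta_j k j) * pm ([], b) z)"
    by (rule ind_eig) auto
  show "\<And>b. qeq (pact_minus k j) (pm ([J0 0], b)) (\<lambda>z. (of_int (- 2 * int b) + of_real (2 * j)) * pm ([], b) z)"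
  proof -
    fix b
    have "qeq (pact_minus k j) (pm ([J0 0], b)) (\<lambda>z. of_real (2 * (j - real b)) * pm ([], b) z)"
      by (rule ind_eig) auto
    moreover have "(of_real (2 * (j - real b)) :: complex) = of_int (- 2 * int b) + of_real (2 * j)"
      by simp
    ultimately show "qeq (pact_minus k j) (pm ([J0 0], b)) (\<lambda>z. (of_int (- 2 * int b) + of_real (2 * j)) * pm ([], b) z)"
      by simp
  qed
  show "\<And>b. qeq (pact_minus k j) (pm ([Kc], b)) (\<lambda>z. of_int k * pm ([], b) z)"
    by (rule ind_eig) auto
qed

theorem proposition3p9:
  fixes k s :: int and j :: real
  assumes "k < -2"
    and "\<exists>t::nat. t \<ge> 1 \<and> j = - real t / 2"
  shows "grading_props (pact_triv k) () s
       \<and> grading_props (pact_plus k j) 0 s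
       \<and> grading_props (pact_minus k j) 0 s"
  using gsetup.main[OF triv_setup] gsetup.main[OF plus_setup] gsetup.main[OF minus_setup] by blast

end
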